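(* Let $G$ be a graph of order $n$ and let $(x_1,\ldots,x_n)$ be a unit eigenvector of the adjacency matrix of $G$ for the eigenvalue $\mu(G)$. If $u$ is a vertex with $x_u=\min\{x_1,\ldots,x_n\}$, then \[ \mu(G-u)\geq\mu(G)\,\frac{1-2x_u^2}{1-x_u^2}. \]
   Context: All graphs are finite and simple; $\mu(G)$ denotes the largest eigenvalue of the adjacency matrix of $G$; $G-u$ is the graph obtained from $G$ by deleting the vertex $u$; the eigenvector is indexed by the vertices of $G$. *)

theory Defs
  imports Complex_Main
begin

text \<open>A finite simple graph: finite vertex set V and an edge relation E that is
  symmetric and irreflexive on V.  Edges outside V are ignored.\<close>
definition simple_graph :: "'a set \<Rightarrow> ('a \<Rightarrow> 'a \<Rightarrow> bool) \<Rightarrow> bool" where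
  "simple_graph V E \<longleftrightarrow> finite V \<and> (\<forall>u\<in>V. \<forall>v\<in>V. E u v = E v u) \<and> (\<forall>v\<in>V. \<not> E v v)"

definition adj :: "('a \<Rightarrow> 'a \<Rightarrow> bool) \<Rightarrow> 'a \<Rightarrow> 'a \<Rightarrow> real" where
  "adj E u v = (if E u v then 1 else 0)"

definition is_eigenpair :: "'a set \<Rightarrow> ('a \<Rightarrow> 'a \<Rightarrow> bool) \<Rightarrow> real \<Rightarrow> ('a \<Rightarrow> real) \<Rightarrow> bool" where
  "is_eigenpair V E lam x \<longleftrightarrow>
     (\<exists>v\<in>V. x v \<noteq> 0) \<and> (\<forall>v\<in>V. (\<Sum>w\<in>V. adj E v w * x w) = lam * x v)"

definition mu :: "'a set \<Rightarrow> ('a \<Rightarrow> 'a \<Rightarrow> bool) \<Rightarrow> real" where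
  "mu V E = Max {lam. \<exists>x. is_eigenpair V E lam x}"

end

theory Submission
  imports Defs "HOL-Analysis.Function_Topology" "Jordan_Normal_Form.Spectral_Radius"
begin

definition qf :: "'a set \<Rightarrow> ('a \<Rightarrow> 'a \<Rightarrow> bool) \<Rightarrow> ('a \<Rightarrow> real) \<Rightarrow> real" where
  "qf W E y = (\<Sum>v\<in>W. \<Sum>w\<in>W. adj E v w * y v * y w)"

definition nrm :: "'a set \<Rightarrow> ('a \<Rightarrow> real) \<Rightarrow> real" where
  "nrm W y = (\<Sum>v\<in>W. (y v)^2)"

lemma eig_finite:
  assumes "finite W"
  shows "finite {lam. \<exists>x. is_eigenpair W E lam x}"
proof -
  obtain ws where ws: "distinct ws" "set ws = W" using finite_distinct_list[OF assms] by blast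
  define n where "n = length ws"
  define A :: "real mat" where "A = mat n n (\<lambda>(i,j). adj E (ws!i) (ws!j))"
  have A: "A \<in> carrier_mat n n" unfolding A_def by simp
  have bij: "bij_betw ((!) ws) {..<n} W" using bij_betw_nth ws n_def by blast
  have sumeq: "(\<Sum>j<n. g (ws!j)) = (\<Sum>w\<in>W. g w)" for g :: "'a \<Rightarrow> real"
    using sum.reindex_bij_betw[OF bij] by blast
  have "{lam. \<exists>x. is_eigenpair W E lam x} \<subseteq> spectrum A"
  proof
    fix lam assume "lam \<in> {lam. \<exists>x. is_eigenpair W E lam x}"
    then obtain x where ex: "\<exists>v\<in>W. x v \<noteq> 0" and eq: "\<forall>v\<in>W. (\<Sum>w\<in>W. adj E v w * x w) = lam * x v"
      unfolding is_eigenpair_def by blast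
    define vv where "vv = vec n (\<lambda>i. x (ws!i))"
    have "eigenvector A vv lam"
      unfolding eigenvector_def
    proof (intro conjI)
      show "vv \<in> carrier_vec (dim_row A)" using A vv_def by simp
      from ex obtain v where v: "v \<in> W" "x v \<noteq> 0" by blast
      then obtain i where i: "i < n" "ws ! i = v" using ws n_def by (metis in_set_conv_nth)
      have "vv $ i \<noteq> 0" using i v vv_def by simp
      then show "vv \<noteq> 0\<^sub>v (dim_row A)" using A i by auto
      show "A *\<^sub>v vv = lam \<cdot>\<^sub>v vv"
      proof (rule eq_vecI)
        fix i assume i: "i < dim_vec (lam \<cdot>\<^sub>v vv)"
        hence i': "i < n" using vv_def by simp
        have "(A *\<^sub>v vv) $ i = (\<Sum>j<n. adj E (ws!i) (ws!j) * x (ws!j))"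
          using i' A unfolding A_def vv_def by (simp add: scalar_prod_def atLeast0LessThan)
        also have "\<dots> = (\<Sum>w\<in>W. adj E (ws!i) w * x w)" by (rule sumeq)
        also have "\<dots> = lam * x (ws!i)" using eq i' ws n_def by (metis nth_mem)
        finally show "(A *\<^sub>v vv) $ i = (lam \<cdot>\<^sub>v vv) $ i" using i' vv_def by simp
      qed (use A vv_def in simp)
    qed
    thus "lam \<in> spectrum A" unfolding spectrum_def eigenvalue_def by blast
  qed
  thus ?thesis using card_finite_spectrum(1)[OF A] finite_subset by blast
qed

lemma sphere_max:
  assumes fin: "finite W" and ne: "W \<noteq> {}"
  shows "\<exists>y. nrm W y = 1 \<and> (\<forall>z. nrm W z = 1 \<longrightarrow> qf W E z \<le> qf W E y)"
proof -
  define X where "X = product_topology (\<lambda>_::'a. euclideanreal) W"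
  define K where "K = {y \<in> topspace X. nrm W y \<in> {1}} \<inter> PiE W (\<lambda>_. {-1..1::real})"
  have cN: "continuous_map X euclideanreal (\<lambda>y. nrm W y)"
    unfolding nrm_def X_def
    by (intro continuous_map_sum continuous_map_real_pow continuous_map_product_projection fin) auto
  have cQ: "continuous_map X euclideanreal (\<lambda>y. qf W E y)"
    unfolding qf_def X_def
    by (intro continuous_map_sum continuous_map_real_mult continuous_map_product_projection fin)
       (auto simp: continuous_map_const)
  have cl: "closedin X {y \<in> topspace X. nrm W y \<in> {1}}"
    by (rule closedin_continuous_map_preimage[OF cN]) simp
  have cp: "compactin X (PiE W (\<lambda>_. {-1..1::real}))"
    unfolding X_def by (simp add: compactin_PiE)
  have K: "compactin X K" unfolding K_def by (rule closed_Int_compactin[OF cl cp])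
  have cK: "compact (qf W E ` K)"
    using image_compactin[OF K cQ] by simp
  from ne obtain w where w: "w \<in> W" by blast
  define e where "e = restrict (\<lambda>v. if v = w then 1 else 0::real) W"
  have ne1: "nrm W e = 1"
  proof -
    have "nrm W e = (\<Sum>v\<in>W. if v = w then 1 else 0)"
      unfolding nrm_def e_def by (intro sum.cong) auto
    also have "\<dots> = 1" using fin w by simp
    finally show ?thesis .
  qed
  have "e \<in> K" unfolding K_def X_def using ne1 by (auto simp: e_def)
  hence "qf W E ` K \<noteq> {}" by blast
  from compact_attains_sup[OF cK this] obtain y where y: "y \<in> K" and ymax: "\<forall>t\<in>K. qf W E t \<le> qf W E y"
    by auto
  have yn: "nrm W y = 1" using y K_def by auto
  have "qf W E z \<le> qf W E y" if z: "nrm W z = 1" for z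
  proof -
    define z' where "z' = restrict z W"
    have n': "nrm W z' = nrm W z" unfolding nrm_def z'_def by (intro sum.cong) auto
    have q': "qf W E z' = qf W E z" unfolding qf_def z'_def by (intro sum.cong) auto
    have "\<bar>z v\<bar> \<le> 1" if v: "v \<in> W" for v
    proof -
      have "(z v)^2 \<le> nrm W z" unfolding nrm_def using fin v
        by (intro member_le_sum) auto
      thus ?thesis using z by (simp add: abs_square_le_1)
    qed
    hence "z' \<in> K" unfolding K_def X_def using n' z by (auto simp: z'_def abs_le_iff)
    thus ?thesis using ymax q' by auto
  qed
  thus ?thesis using yn by blast
qed


lemma rayleigh_bound:
  assumes "finite W" "W \<noteq> {}"
  obtains y where "nrm W y = 1" "\<forall>z. qf W E z \<le> qf W E y * nrm W z"
proof -
  obtain y where y: "nrm W y = 1" and ym: "\<forall>z. nrm W z = 1 \<longrightarrow> qf W E z \<le> qf W E y"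
    using sphere_max[OF assms] by blast
  have "qf W E z \<le> qf W E y * nrm W z" for z
  proof (cases "nrm W z = 0")
    case True
    hence "\<forall>v\<in>W. (z v)^2 = 0" unfolding nrm_def using assms(1)
      by (subst (asm) sum_nonneg_eq_0_iff) auto
    hence "\<forall>v\<in>W. z v = 0" by simp
    hence "qf W E z = 0" unfolding qf_def by simp
    thus ?thesis using True by simp
  next
    case False
    have "nrm W z \<ge> 0" unfolding nrm_def by (simp add: sum_nonneg)
    hence np: "nrm W z > 0" using False by simp
    define c where "c = nrm W z"
    define z' where "z' = (\<lambda>v. z v / sqrt c)"
    have sc: "(sqrt c)^2 = c" using np c_def by simp
    have "nrm W z' = nrm W z / c" unfolding nrm_def z'_def
      by (simp add: power_divide sc sum_divide_distrib)
    hence n1: "nrm W z' = 1" using np c_def by simp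
    have "qf W E z' = (\<Sum>v\<in>W. \<Sum>w\<in>W. adj E v w * z v * z w / (sqrt c)^2)" unfolding qf_def z'_def
      by (intro sum.cong refl) (simp add: power2_eq_square)
    also have "\<dots> = qf W E z / c" unfolding qf_def by (simp add: sc sum_divide_distrib)
    finally have "qf W E z / c \<le> qf W E y" using ym n1 by auto
    thus ?thesis using np c_def by (simp add: pos_divide_le_eq)
  qed
  thus ?thesis using that y by blast
qed

lemma key: fixes qy qr ny nr C Y S lam t :: real
  assumes "C - lam * Y = S" "qy - lam * ny = 0"
  shows "qy + t * C + t * C + t^2 * qr - lam * (ny + 2 * t * Y + t^2 * nr) = 2 * t * S + t^2 * (qr - lam * nr)"
proof -
  have "C = S + lam * Y" "qy = lam * ny" using assms by auto
  thus ?thesis by (simp add: algebra_simps)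
qed

lemma max_is_eig:
  assumes sym: "\<forall>v\<in>W. \<forall>w\<in>W. E v w = E w v" and fin: "finite W"
    and y: "nrm W y = 1" and bnd: "\<forall>z. qf W E z \<le> qf W E y * nrm W z"
  shows "is_eigenpair W E (qf W E y) y"
proof -
  define lam where "lam = qf W E y"
  define r where "r = (\<lambda>v. (\<Sum>w\<in>W. adj E v w * y w) - lam * y v)"
  define g where "g = (\<lambda>z. qf W E z - lam * nrm W z)"
  have gle: "g z \<le> 0" for z using bnd unfolding g_def lam_def by auto
  have gy: "g y = 0" unfolding g_def lam_def using y by simp
  have asym: "adj E w v = adj E v w" if "v \<in> W" "w \<in> W" for v w
    using sym that unfolding adj_def by auto
  define C where "C = (\<Sum>v\<in>W. \<Sum>w\<in>W. adj E v w * r v * y w)"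
  have cross: "(\<Sum>v\<in>W. \<Sum>w\<in>W. adj E v w * y v * r w) = C"
  proof -
    have "(\<Sum>v\<in>W. \<Sum>w\<in>W. adj E v w * y v * r w) = (\<Sum>w\<in>W. \<Sum>v\<in>W. adj E v w * y v * r w)"
      by (rule sum.swap)
    also have "\<dots> = (\<Sum>w\<in>W. \<Sum>v\<in>W. adj E w v * r w * y v)"
      using asym by (intro sum.cong refl) (simp add: mult_ac)
    finally show ?thesis unfolding C_def .
  qed
  have eq: "g (\<lambda>v. y v + t * r v) = 2 * t * (\<Sum>v\<in>W. (r v)^2) + t^2 * g r" for t
  proof -
    have q: "qf W E (\<lambda>v. y v + t * r v) = qf W E y + t * C
        + t * (\<Sum>v\<in>W. \<Sum>w\<in>W. adj E v w * y v * r w) + t^2 * qf W E r"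
    proof -
      have "qf W E (\<lambda>v. y v + t * r v) = (\<Sum>v\<in>W. \<Sum>w\<in>W. adj E v w * y v * y w
          + t * (adj E v w * r v * y w) + t * (adj E v w * y v * r w) + t^2 * (adj E v w * r v * r w))"
        unfolding qf_def by (intro sum.cong refl) (simp add: algebra_simps power2_eq_square)
      also have "\<dots> = (\<Sum>v\<in>W. \<Sum>w\<in>W. adj E v w * y v * y w) + t * (\<Sum>v\<in>W. \<Sum>w\<in>W. adj E v w * r v * y w)
        + t * (\<Sum>v\<in>W. \<Sum>w\<in>W. adj E v w * y v * r w) + t^2 * (\<Sum>v\<in>W. \<Sum>w\<in>W. adj E v w * r v * r w)"
        by (simp only: sum.distrib sum_distrib_left[symmetric])
      also have "\<dots> = qf W E y + t * C
        + t * (\<Sum>v\<in>W. \<Sum>w\<in>W. adj E v w * y v * r w) + t^2 * qf W E r"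
        unfolding qf_def C_def ..
      finally show ?thesis .
    qed
    have n: "nrm W (\<lambda>v. y v + t * r v) = nrm W y + 2 * t * (\<Sum>v\<in>W. y v * r v) + t^2 * nrm W r"
    proof -
      have "nrm W (\<lambda>v. y v + t * r v) = (\<Sum>v\<in>W. (y v)^2 + 2 * t * (y v * r v) + t^2 * (r v)^2)"
        unfolding nrm_def by (intro sum.cong refl) (simp add: algebra_simps power2_eq_square)
      also have "\<dots> = (\<Sum>v\<in>W. (y v)^2) + 2 * t * (\<Sum>v\<in>W. y v * r v) + t^2 * (\<Sum>v\<in>W. (r v)^2)"
        by (simp only: sum.distrib sum_distrib_left[symmetric])
      also have "\<dots> = nrm W y + 2 * t * (\<Sum>v\<in>W. y v * r v) + t^2 * nrm W r"
        unfolding nrm_def ..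
      finally show ?thesis .
    qed
    have "C - lam * (\<Sum>v\<in>W. y v * r v) = (\<Sum>v\<in>W. r v * r v)"
    proof -
      have "C = (\<Sum>v\<in>W. r v * (\<Sum>w\<in>W. adj E v w * y w))"
        unfolding C_def sum_distrib_left by (intro sum.cong refl) (simp add: mult_ac)
      moreover have "lam * (\<Sum>v\<in>W. y v * r v) = (\<Sum>v\<in>W. r v * (lam * y v))"
        unfolding sum_distrib_left by (intro sum.cong refl) (simp add: mult_ac)
      ultimately have "C - lam * (\<Sum>v\<in>W. y v * r v) = (\<Sum>v\<in>W. r v * (\<Sum>w\<in>W. adj E v w * y w)) - (\<Sum>v\<in>W. r v * (lam * y v))"
        by (simp only:)
      also have "\<dots> = (\<Sum>v\<in>W. r v * (\<Sum>w\<in>W. adj E v w * y w) - r v * (lam * y v))"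
        by (simp only: sum_subtractf)
      also have "\<dots> = (\<Sum>v\<in>W. r v * ((\<Sum>w\<in>W. adj E v w * y w) - lam * y v))"
        by (simp only: right_diff_distrib)
      also have "\<dots> = (\<Sum>v\<in>W. r v * r v)" unfolding r_def ..
      finally show ?thesis .
    qed
    hence "C - lam * (\<Sum>v\<in>W. y v * r v) = (\<Sum>v\<in>W. (r v)^2)" by (simp add: power2_eq_square)
    moreover have "qf W E y - lam * nrm W y = 0" using gy unfolding g_def .
    ultimately have k: "qf W E y + t * C + t * C + t^2 * qf W E r - lam * (nrm W y + 2 * t * (\<Sum>v\<in>W. y v * r v) + t^2 * nrm W r)
       = 2 * t * (\<Sum>v\<in>W. (r v)^2) + t^2 * (qf W E r - lam * nrm W r)" by (rule key)
    show ?thesis unfolding g_def q n cross using k .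
  qed
  define S where "S = (\<Sum>v\<in>W. (r v)^2)"
  have S0: "S \<ge> 0" unfolding S_def by (simp add: sum_nonneg)
  have "S = 0"
  proof (rule ccontr)
    assume "S \<noteq> 0"
    hence Sp: "S > 0" using S0 by simp
    define G where "G = g r"
    define t where "t = S / (\<bar>G\<bar> + 1)"
    have tp: "t > 0" using Sp unfolding t_def by (simp add: add_pos_nonneg)
    have "2 * t * S + t^2 * G \<le> 0" using eq[of t] gle[of "\<lambda>v. y v + t * r v"] unfolding S_def G_def by simp
    hence "t * (2 * S + t * G) \<le> 0" by (simp add: algebra_simps power2_eq_square)
    hence "2 * S + t * G \<le> 0" using tp by (simp add: mult_le_0_iff)
    moreover have "t * \<bar>G\<bar> < S"
    proof -
      have "t * \<bar>G\<bar> = S * (\<bar>G\<bar> / (\<bar>G\<bar> + 1))" unfolding t_def by simp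
      also have "\<dots> < S * 1" using Sp by (intro mult_strict_left_mono) auto
      finally show ?thesis by simp
    qed
    moreover have "- (t * \<bar>G\<bar>) \<le> t * G"
    proof -
      have "- G \<le> \<bar>G\<bar>" by simp
      from mult_left_mono[OF this, of t] tp show ?thesis by simp
    qed
    ultimately show False using Sp by linarith
  qed
  hence "\<forall>v\<in>W. (r v)^2 = 0" unfolding S_def using fin
    by (subst (asm) sum_nonneg_eq_0_iff) auto
  hence req: "\<forall>v\<in>W. (\<Sum>w\<in>W. adj E v w * y w) = lam * y v" unfolding r_def by simp
  have "\<exists>v\<in>W. y v \<noteq> 0"
  proof (rule ccontr)
    assume "\<not> ?thesis"
    hence "nrm W y = 0" unfolding nrm_def by simp
    thus False using y by simp
  qed
  thus ?thesis using req unfolding is_eigenpair_def lam_def by blast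
qed

lemma mu_ge:
  assumes sg: "simple_graph W E" and ne: "W \<noteq> {}"
  shows "\<forall>z. nrm W z > 0 \<longrightarrow> mu W E \<ge> qf W E z / nrm W z" and "mu W E \<ge> 0"
proof -
  have fin: "finite W" and sym: "\<forall>v\<in>W. \<forall>w\<in>W. E v w = E w v" and irr: "\<forall>v\<in>W. \<not> E v v"
    using sg unfolding simple_graph_def by auto
  obtain y where y: "nrm W y = 1" and b: "\<forall>z. qf W E z \<le> qf W E y * nrm W z"
    using rayleigh_bound[OF fin ne] by blast
  have "is_eigenpair W E (qf W E y) y" using max_is_eig[OF sym fin y b] .
  hence ml: "mu W E \<ge> qf W E y" unfolding mu_def
    using eig_finite[OF fin, of E] by (intro Max_ge) auto
  show "\<forall>z. nrm W z > 0 \<longrightarrow> mu W E \<ge> qf W E z / nrm W z"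
  proof (intro allI impI)
    fix z assume "nrm W z > 0"
    hence "qf W E z / nrm W z \<le> qf W E y" using b by (simp add: pos_divide_le_eq)
    thus "mu W E \<ge> qf W E z / nrm W z" using ml by simp
  qed
  from ne obtain w where w: "w \<in> W" by blast
  define e where "e = (\<lambda>v. if v = w then 1 else 0::real)"
  have "nrm W e = (\<Sum>v\<in>W. if v = w then 1 else 0)"
    unfolding nrm_def e_def by (intro sum.cong refl) auto
  hence "nrm W e = 1" using fin w by simp
  moreover have "qf W E e = 0"
  proof -
    have "qf W E e = (\<Sum>v\<in>W. if v = w then adj E w w else 0)"
      unfolding qf_def
    proof (intro sum.cong refl)
      fix v assume v: "v \<in> W"
      show "(\<Sum>w'\<in>W. adj E v w' * e v * e w') = (if v = w then adj E w w else 0)"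
      proof (cases "v = w")
        case True
        have "(\<Sum>w'\<in>W. adj E v w' * e v * e w') = (\<Sum>w'\<in>W. if w' = w then adj E w w else 0)"
          using True by (intro sum.cong refl) (auto simp: e_def)
        also have "\<dots> = adj E w w" using fin w by simp
        finally show ?thesis using True by simp
      qed (simp add: e_def)
    qed
    also have "\<dots> = 0" using irr w fin by (simp add: adj_def)
    finally show ?thesis .
  qed
  ultimately have "0 \<le> qf W E y" using b[rule_format, of e] by simp
  thus "mu W E \<ge> 0" using ml by simp
qed


theorem lemma2:
  fixes V :: "'a set" and E :: "'a \<Rightarrow> 'a \<Rightarrow> bool" and x :: "'a \<Rightarrow> real" and u :: 'a
  assumes "simple_graph V E"
    and "card V \<ge> 2"
    and "is_eigenpair V E (mu V E) x"
    and "(\<Sum>v\<in>V. (x v)\<^sup>2) = 1"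
    and "u \<in> V"
    and "x u = Min (x ` V)"
  shows "mu (V - {u}) E \<ge> mu V E * (1 - 2 * (x u)\<^sup>2) / (1 - (x u)\<^sup>2)"
proof -
  define W where "W = V - {u}"
  define m where "m = mu V E"
  have fin: "finite V" and sym: "\<forall>v\<in>V. \<forall>w\<in>V. E v w = E w v" and irr: "\<forall>v\<in>V. \<not> E v v"
    using assms(1) unfolding simple_graph_def by auto
  have sgW: "simple_graph W E" using assms(1) unfolding simple_graph_def W_def by auto
  have finW: "finite W" using fin W_def by simp
  have "card W = card V - 1" using assms(5) fin unfolding W_def by simp
  hence neW: "W \<noteq> {}" using assms(2) by auto
  have V: "V = insert u W" "u \<notin> W" using assms(5) W_def by auto
  have ev: "\<forall>v\<in>V. (\<Sum>w\<in>V. adj E v w * x w) = m * x v"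
    using assms(3) unfolding is_eigenpair_def m_def by blast
  have auu: "adj E u u = 0" using irr assms(5) by (simp add: adj_def)
  have asym: "adj E w u = adj E u w" if w: "w \<in> W" for w
  proof -
    have "w \<in> V" using w unfolding W_def by blast
    hence "E w u = E u w" using sym assms(5) by blast
    thus ?thesis unfolding adj_def by simp
  qed
  have qV: "qf V E x = m"
  proof -
    have "qf V E x = (\<Sum>v\<in>V. x v * (\<Sum>w\<in>V. adj E v w * x w))"
      unfolding qf_def sum_distrib_left by (intro sum.cong refl) (simp add: mult_ac)
    also have "\<dots> = (\<Sum>v\<in>V. m * (x v)^2)"
      using ev by (intro sum.cong refl) (simp add: power2_eq_square mult_ac)
    also have "\<dots> = m" using assms(4) by (simp add: sum_distrib_left[symmetric])
    finally show ?thesis .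
  qed
  have su: "(\<Sum>w\<in>W. adj E u w * x w) = m * x u"
  proof -
    have "(\<Sum>w\<in>V. adj E u w * x w) = m * x u" using ev assms(5) by blast
    moreover have "(\<Sum>w\<in>V. adj E u w * x w) = adj E u u * x u + (\<Sum>w\<in>W. adj E u w * x w)"
      unfolding V(1) by (rule sum.insert[OF finW V(2)])
    ultimately show ?thesis using auu by simp
  qed
  have split: "qf V E x = qf W E x + 2 * x u * (\<Sum>w\<in>W. adj E u w * x w)"
  proof -
    have e1: "qf V E x = (adj E u u * x u * x u + (\<Sum>w\<in>W. adj E u w * x u * x w))
        + (\<Sum>v\<in>W. adj E v u * x v * x u + (\<Sum>w\<in>W. adj E v w * x v * x w))"
      unfolding qf_def V(1) sum.insert[OF finW V(2)] ..
    have e2: "(\<Sum>v\<in>W. adj E v u * x v * x u + (\<Sum>w\<in>W. adj E v w * x v * x w))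
        = (\<Sum>v\<in>W. adj E v u * x v * x u) + qf W E x"
      unfolding qf_def by (rule sum.distrib)
    have e3: "(\<Sum>v\<in>W. adj E v u * x v * x u) = x u * (\<Sum>w\<in>W. adj E u w * x w)"
      unfolding sum_distrib_left using asym by (intro sum.cong refl) (simp add: mult_ac)
    have e4: "(\<Sum>w\<in>W. adj E u w * x u * x w) = x u * (\<Sum>w\<in>W. adj E u w * x w)"
      unfolding sum_distrib_left by (intro sum.cong refl) (simp add: mult_ac)
    have "qf V E x = x u * (\<Sum>w\<in>W. adj E u w * x w) + (x u * (\<Sum>w\<in>W. adj E u w * x w) + qf W E x)"
      using e1 e2 e3 e4 auu by simp
    thus ?thesis by simp
  qed
  have "qf W E x = qf V E x - 2 * x u * (\<Sum>w\<in>W. adj E u w * x w)" using split by linarith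
  also have "\<dots> = m - 2 * x u * (m * x u)" by (simp only: qV su)
  also have "\<dots> = m * (1 - 2 * (x u)^2)" by (simp add: algebra_simps power2_eq_square)
  finally have qW: "qf W E x = m * (1 - 2 * (x u)^2)" .
  have "(\<Sum>v\<in>V. (x v)\<^sup>2) = (x u)^2 + nrm W x"
    unfolding nrm_def V(1) by (rule sum.insert[OF finW V(2)])
  hence nW: "nrm W x = 1 - (x u)^2" using assms(4) by simp
  have nW0: "nrm W x \<ge> 0" unfolding nrm_def by (simp add: sum_nonneg)
  show ?thesis
  proof (cases "nrm W x > 0")
    case True
    have "qf W E x / nrm W x \<le> mu W E" using mu_ge(1)[OF sgW neW] True by blast
    thus ?thesis using qW nW unfolding W_def m_def by simp
  next
    case False
    hence "1 - (x u)^2 = 0" using nW nW0 by simp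
    thus ?thesis using mu_ge(2)[OF sgW neW] unfolding W_def by simp
  qed
qed

end
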